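(* Let $\mathsf{A}\subset GL_2(\mathbb{R})$ with $\mathscr{R}(\mathsf{A})\neq\emptyset$ be such that $\mathcal{S}(\mathsf{A})$ is almost multiplicative. Let $X_u=\{A\mathbb{R}^2 : A\in\mathscr{R}(\mathsf{A})\}\subset\mathbb{RP}^1$ and $X_s=\{\ker A : A\in\mathscr{R}(\mathsf{A})\}\subset\mathbb{RP}^1$. Then $X_u$ and $X_s$ are nonempty, compact, and disjoint. Furthermore, for every nonzero $A\in\mathscr{S}(\mathsf{A})$ and every $V\in X_u$, $AV$ is a line and $AV\in X_u$.
   Context: $\|\cdot\|$ is the operator norm; $\mathbb{RP}^1$ is the real projective line (lines through the origin of $\mathbb{R}^2$). $\mathcal{S}(\mathsf{A})$ is the semigroup of finite products of elements of $\mathsf{A}$; $\mathscr{S}(\mathsf{A})=\overline{\mathbb{R}\mathcal{S}(\mathsf{A})}\subset M_2(\mathbb{R})$; $\mathscr{R}(\mathsf{A})=\{A\in\mathscr{S}(\mathsf{A}):\operatorname{rank}(A)=1\}$. A semigroup $\mathcal{S}$ is almost multiplicative if there is $\kappa>0$ with $\|AB\|\ge\kappa\|A\|\|B\|$ for all $A,B\in\mathcal{S}$. *)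

theory Defs
  imports "HOL-Analysis.Analysis"
begin

type_synonym mat2 = "real^2^2"

definition opnorm :: "mat2 \<Rightarrow> real" where
  "opnorm M = onorm (\<lambda>x. M *v x)"

inductive_set semigrp :: "mat2 set \<Rightarrow> mat2 set" for As where
  gen: "M \<in> As \<Longrightarrow> M \<in> semigrp As"
| mult: "M \<in> semigrp As \<Longrightarrow> N \<in> semigrp As \<Longrightarrow> M ** N \<in> semigrp As"

definition scrS :: "mat2 set \<Rightarrow> mat2 set" where
  "scrS As = closure {c *\<^sub>R M | c M. M \<in> semigrp As}"

definition scrR :: "mat2 set \<Rightarrow> mat2 set" where
  "scrR As = {M \<in> scrS As. rank M = 1}"

definition almost_multiplicative :: "mat2 set \<Rightarrow> bool" where
  "almost_multiplicative S \<longleftrightarrow>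
     (\<exists>\<kappa>>0. \<forall>A\<in>S. \<forall>B\<in>S. opnorm (A ** B) \<ge> \<kappa> * opnorm A * opnorm B)"

definition RP1 :: "(real^2) set set" where
  "RP1 = {L. \<exists>v. v \<noteq> 0 \<and> L = span {v}}"

text \<open>Topology of RP^1: the quotient topology of the unit circle under v \<mapsto> span{v}.\<close>
definition rp1_topology :: "(real^2) set topology" where
  "rp1_topology = topology (\<lambda>U. U \<subseteq> RP1 \<and>
      openin (top_of_set (sphere 0 1)) {v \<in> sphere 0 1. span {v} \<in> U})"

lemma istopology_rp1: "istopology (\<lambda>U. U \<subseteq> RP1 \<and>
      openin (top_of_set (sphere (0::real^2) 1)) {v \<in> sphere 0 1. span {v} \<in> U})"
proof -
  have 1: "{v \<in> sphere (0::real^2) 1. span {v} \<in> S \<inter> T} =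
        {v \<in> sphere 0 1. span {v} \<in> S} \<inter> {v \<in> sphere 0 1. span {v} \<in> T}" for S T by auto
  have 2: "{v \<in> sphere (0::real^2) 1. span {v} \<in> \<Union>K} =
        \<Union>((\<lambda>U. {v \<in> sphere 0 1. span {v} \<in> U}) ` K)" for K by auto
  show ?thesis unfolding istopology_def
    apply (intro conjI allI impI)
       apply blast
      apply (simp only: 1)
      apply (blast intro: openin_Int)
     apply blast
    apply (simp only: 2)
    apply (rule openin_Union)
    apply blast
    done
qed

end

theory Submission
  imports Defs
begin

lemma rank1_iff: "rank (M::mat2) = 1 \<longleftrightarrow> M \<noteq> 0 \<and> det M = 0"
proof -
  have "rank M \<le> 2" using rank_bound[of M] by simp
  moreover have "det M = 0 \<longleftrightarrow> rank M < 2" using det_eq_0_rank[of M] by simp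
  moreover have "rank M = 0 \<longleftrightarrow> M = 0" by (rule rank_eq_0)
  ultimately show ?thesis by linarith
qed

lemma opnorm_scale: "opnorm (c *\<^sub>R M) = \<bar>c\<bar> * opnorm M"
proof -
  have "opnorm (c *\<^sub>R M) = onorm (\<lambda>x. c *\<^sub>R (M *v x))"
    unfolding opnorm_def by (simp add: scaleR_matrix_vector_assoc)
  also have "\<dots> = \<bar>c\<bar> * onorm (\<lambda>x. M *v x)"
    by (rule onorm_scaleR[OF matrix_vector_mul_bounded_linear])
  finally show ?thesis unfolding opnorm_def .
qed

lemma opnorm_pos: "M \<noteq> 0 \<Longrightarrow> opnorm M > 0"
  unfolding opnorm_def
  by (metis matrix_eq matrix_vector_mult_0 onorm_pos_lt[OF matrix_vector_mul_bounded_linear])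

lemma opnorm_0: "opnorm 0 = 0"
proof -
  have e: "((*v) (0::mat2)) = (\<lambda>x. 0)" by (simp add: fun_eq_iff)
  show ?thesis unfolding opnorm_def e by (rule onorm_zero)
qed

lemma opnorm_diff_le: "opnorm (M::mat2) \<le> opnorm (M - N) + opnorm N"
proof -
  have "opnorm M = onorm (\<lambda>x. (M - N) *v x + N *v x)"
    unfolding opnorm_def by (simp add: matrix_vector_mult_diff_rdistrib)
  also have "\<dots> \<le> opnorm (M - N) + opnorm N"
    unfolding opnorm_def
    by (rule onorm_triangle[OF matrix_vector_mul_bounded_linear matrix_vector_mul_bounded_linear])
  finally show ?thesis .
qed

lemma opnorm_le_norm: "opnorm (M::mat2) \<le> 4 * norm M"
proof -
  have "\<bar>M$i$j\<bar> \<le> norm M" for i j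
    by (rule order_trans[OF component_le_norm_cart Finite_Cartesian_Product.norm_nth_le])
  then have "opnorm M \<le> real CARD(2) * real CARD(2) * norm M"
    unfolding opnorm_def by (rule onorm_le_matrix_component)
  then show ?thesis by simp
qed

lemma opnorm_cont: "continuous_on S opnorm"
proof (rule lipschitz_on_continuous_on)
  show "4-lipschitz_on S opnorm"
  proof (rule lipschitz_onI)
    fix M N :: mat2
    have 1: "opnorm M - opnorm N \<le> 4 * norm (M - N)"
      using opnorm_diff_le[of M N] opnorm_le_norm[of "M - N"] by simp
    have 2: "opnorm N - opnorm M \<le> 4 * norm (M - N)"
      using opnorm_diff_le[of N M] opnorm_le_norm[of "N - M"] by (simp add: norm_minus_commute)
    show "dist (opnorm M) (opnorm N) \<le> 4 * dist M N"
      using 1 2 by (simp add: dist_real_def dist_norm abs_le_iff)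
  qed simp
qed

definition mcone :: "mat2 set \<Rightarrow> mat2 set" where
  "mcone As = {c *\<^sub>R M | c M. M \<in> semigrp As}"

lemma scrS_cone: "scrS As = closure (mcone As)"
  unfolding scrS_def mcone_def ..

lemma scrS_closed: "closed (scrS As)"
  unfolding scrS_def by simp

lemma scrS_scale: assumes "M \<in> scrS As" shows "c *\<^sub>R M \<in> scrS As"
proof -
  have "((*\<^sub>R) c) ` mcone As \<subseteq> mcone As"
    unfolding mcone_def by auto (metis scaleR_scaleR)
  then have "closure (((*\<^sub>R) c) ` mcone As) \<subseteq> scrS As"
    unfolding scrS_cone by (rule closure_mono)
  then show ?thesis using assms unfolding scrS_cone closure_scaleR[symmetric] by blast
qed

lemma cont_mult: "continuous_on S (\<lambda>p::mat2\<times>mat2. fst p ** snd p)"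
  unfolding matrix_matrix_mult_def
  by (intro continuous_on_vec_lambda continuous_intros)

lemma scrS_mult: assumes "A \<in> scrS As" "B \<in> scrS As" shows "A ** B \<in> scrS As"
proof -
  have "(\<lambda>p. fst p ** snd p) ` (mcone As \<times> mcone As) \<subseteq> mcone As"
  proof (clarsimp simp: mcone_def)
    fix c d M N assume "M \<in> semigrp As" "N \<in> semigrp As"
    moreover have "(c *\<^sub>R M) ** (d *\<^sub>R N) = (c * d) *\<^sub>R (M ** N)"
      by (simp add: matrix_scalar_ac scalar_matrix_assoc mult.commute)
    ultimately show "\<exists>e P. (c *\<^sub>R M) ** (d *\<^sub>R N) = e *\<^sub>R P \<and> P \<in> semigrp As"
      by (blast intro: semigrp.mult)
  qed
  then have "(\<lambda>p. fst p ** snd p) ` closure (mcone As \<times> mcone As) \<subseteq> scrS As"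
    by (intro image_closure_subset cont_mult scrS_closed)
       (use closure_subset in \<open>unfold scrS_cone, blast\<close>)
  then show ?thesis using assms unfolding scrS_cone closure_Times by force
qed

lemma am_ext:
  assumes am: "almost_multiplicative (semigrp As)"
  obtains k where "k > 0" "\<And>A B. A \<in> scrS As \<Longrightarrow> B \<in> scrS As \<Longrightarrow> opnorm (A ** B) \<ge> k * opnorm A * opnorm B"
proof -
  obtain k where k: "k > 0" "\<forall>A\<in>semigrp As. \<forall>B\<in>semigrp As. opnorm (A ** B) \<ge> k * opnorm A * opnorm B"
    using am unfolding almost_multiplicative_def by blast
  let ?P = "{p::mat2\<times>mat2. k * opnorm (fst p) * opnorm (snd p) \<le> opnorm (fst p ** snd p)}"
  have c1: "continuous_on UNIV (opnorm \<circ> (\<lambda>p::mat2\<times>mat2. fst p ** snd p))"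
    by (rule continuous_on_compose[OF cont_mult opnorm_cont])
  have c2: "continuous_on UNIV (opnorm \<circ> (fst :: mat2\<times>mat2 \<Rightarrow> mat2))"
    by (rule continuous_on_compose[OF continuous_on_fst[OF continuous_on_id] opnorm_cont])
  have c3: "continuous_on UNIV (opnorm \<circ> (snd :: mat2\<times>mat2 \<Rightarrow> mat2))"
    by (rule continuous_on_compose[OF continuous_on_snd[OF continuous_on_id] opnorm_cont])
  have "closed ?P"
    using c1 c2 c3 by (intro closed_Collect_le continuous_intros) (auto simp: o_def)
  moreover have "mcone As \<times> mcone As \<subseteq> ?P"
  proof (clarsimp simp: mcone_def)
    fix a b M N assume MN: "M \<in> semigrp As" "N \<in> semigrp As"
    have e: "(a *\<^sub>R M) ** (b *\<^sub>R N) = (a * b) *\<^sub>R (M ** N)"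
      by (simp add: matrix_scalar_ac scalar_matrix_assoc mult.commute)
    have "k * (\<bar>a\<bar> * opnorm M) * (\<bar>b\<bar> * opnorm N) = \<bar>a * b\<bar> * (k * opnorm M * opnorm N)"
      by (simp add: abs_mult algebra_simps)
    also have "\<dots> \<le> \<bar>a * b\<bar> * opnorm (M ** N)"
      using k(2) MN by (intro mult_left_mono) auto
    finally show "k * opnorm (a *\<^sub>R M) * opnorm (b *\<^sub>R N) \<le> opnorm ((a *\<^sub>R M) ** (b *\<^sub>R N))"
      unfolding e opnorm_scale .
  qed
  ultimately have "closure (mcone As \<times> mcone As) \<subseteq> ?P" by (rule closure_minimal[rotated])
  then have "\<And>A B. A \<in> scrS As \<Longrightarrow> B \<in> scrS As \<Longrightarrow> opnorm (A ** B) \<ge> k * opnorm A * opnorm B"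
    unfolding scrS_cone closure_Times by auto
  then show ?thesis using k(1) that by blast
qed

lemma scrS_nonzero_mult:
  assumes am: "almost_multiplicative (semigrp As)"
    and "A \<in> scrS As" "B \<in> scrS As" "A \<noteq> 0" "B \<noteq> 0"
  shows "A ** B \<noteq> 0"
proof
  assume z: "A ** B = 0"
  obtain k where k: "k > 0" "\<And>A B. A \<in> scrS As \<Longrightarrow> B \<in> scrS As \<Longrightarrow> opnorm (A ** B) \<ge> k * opnorm A * opnorm B"
    using am_ext[OF am] by blast
  have "k * opnorm A * opnorm B > 0" using k(1) opnorm_pos assms by simp
  moreover have "k * opnorm A * opnorm B \<le> 0" using k(2)[OF assms(2,3)] z opnorm_0 by simp
  ultimately show False by simp
qed

lemma line_dim1:
  fixes S :: "(real^2) set"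
  assumes "subspace S" "dim S = 1"
  shows "\<exists>v. v \<noteq> 0 \<and> S = span {v}"
proof -
  obtain B where B: "B \<subseteq> S" "independent B" "S \<subseteq> span B" "card B = dim S"
    using basis_exists by blast
  then obtain v where v: "B = {v}" using assms(2) card_1_singletonE by metis
  have "v \<noteq> 0" using B(2) v dependent_zero by blast
  moreover have "span {v} \<subseteq> S" using B(1) v assms(1) span_minimal by blast
  ultimately show ?thesis using B(3) v by blast
qed

lemma kernel_dim:
  fixes M :: mat2
  assumes "M \<noteq> 0" "det M = 0"
  shows "dim {x. M *v x = 0} = 1"
proof -
  let ?K = "{x. M *v x = 0}"
  have sub: "subspace ?K"
    using linear_subspace_kernel[OF matrix_vector_mul_linear[of M]] by simp
  have le: "dim ?K \<le> 2" using dim_subset_UNIV_cart[of ?K] by simp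
  have "rank M < 2" using assms(2) det_eq_0_rank[of M] by simp
  then obtain x where x: "x \<noteq> 0" "M *v x = 0"
    using matrix_nonfull_linear_equations_eq[of M] by auto
  have ne0: "dim ?K \<noteq> 0" using x dim_eq_0[of ?K] by auto
  have ne2: "dim ?K \<noteq> 2"
  proof
    assume "dim ?K = 2"
    then have "span ?K = UNIV" using dim_eq_full[of ?K] by simp
    then have "?K = UNIV" using sub span_eq_iff by metis
    then have "M = 0" using matrix_eq[of M 0] by auto
    then show False using assms(1) by simp
  qed
  show ?thesis using le ne0 ne2 by linarith
qed

lemma ker_line:
  fixes M :: mat2
  assumes "M \<noteq> 0" "det M = 0"
  shows "\<exists>v. v \<noteq> 0 \<and> {x. M *v x = 0} = span {v}"
  using line_dim1[OF linear_subspace_kernel[OF matrix_vector_mul_linear[of M]] kernel_dim[OF assms]]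
  by simp

lemma range_line:
  fixes M :: mat2
  assumes "rank M = 1"
  shows "\<exists>v. v \<noteq> 0 \<and> range (\<lambda>x. M *v x) = span {v}"
  using line_dim1[OF linear_subspace_image[OF matrix_vector_mul_linear[of M] subspace_UNIV]]
    assms rank_dim_range[of M] by simp

lemma span1_scale:
  fixes v :: "real^2"
  assumes "c \<noteq> 0" shows "span {c *\<^sub>R v} = span {v}"
proof
  show "span {c *\<^sub>R v} \<subseteq> span {v}"
    by (simp add: span_minimal span_mul span_base subspace_span)
  have "v = (1/c) *\<^sub>R (c *\<^sub>R v)" using assms by simp
  then have "v \<in> span {c *\<^sub>R v}" by (metis span_mul span_base singletonI)
  then show "span {v} \<subseteq> span {c *\<^sub>R v}"
    by (simp add: span_minimal subspace_span)
qed

lemma sphere_RP1: "norm (x::real^2) = 1 \<Longrightarrow> span {x} \<in> RP1"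
  unfolding RP1_def by (intro CollectI exI[of _ x]) auto

lemma span1_eq:
  fixes u v :: "real^2"
  assumes "u \<noteq> 0" "u \<in> span {v}" shows "span {u} = span {v}"
proof -
  obtain c where c: "u = c *\<^sub>R v" using assms(2) unfolding span_singleton by auto
  then have "c \<noteq> 0" using assms(1) by auto
  then show ?thesis using c span1_scale by simp
qed

lemma unit_gen:
  fixes v :: "real^2"
  assumes "v \<noteq> 0" shows "\<exists>w. norm w = 1 \<and> span {w} = span {v}"
  using assms span1_scale[of "1 / norm v" v] by (intro exI[of _ "(1 / norm v) *\<^sub>R v"]) auto

lemma in_span1_unit:
  fixes v y :: "real^2"
  assumes "norm v = 1" "y \<in> span {v}" shows "y = (y \<bullet> v) *\<^sub>R v"
proof -
  obtain t where t: "y = t *\<^sub>R v" using assms(2) unfolding span_singleton by auto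
  have "v \<bullet> v = 1" using assms(1) by (simp add: dot_square_norm)
  then show ?thesis using t by simp
qed

lemma topspace_rp1: "topspace rp1_topology = RP1"
proof -
  have o: "openin rp1_topology U \<longleftrightarrow> U \<subseteq> RP1 \<and>
      openin (top_of_set (sphere 0 1)) {v \<in> sphere 0 1. span {v} \<in> U}" for U
    unfolding rp1_topology_def using istopology_rp1 by simp
  have "{v \<in> sphere (0::real^2) 1. span {v} \<in> RP1} = sphere 0 1"
    using sphere_RP1 by auto
  then have "openin rp1_topology RP1" using o by simp
  then have "RP1 \<subseteq> topspace rp1_topology" by (rule openin_subset)
  moreover have "topspace rp1_topology \<subseteq> RP1"
    using o unfolding topspace_def by blast
  ultimately show ?thesis by blast
qed

lemma cont_map_rp1: "continuous_map (top_of_set (sphere 0 1)) rp1_topology (\<lambda>v. span {v})"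
proof -
  have o: "openin rp1_topology U \<longleftrightarrow> U \<subseteq> RP1 \<and>
      openin (top_of_set (sphere 0 1)) {v \<in> sphere 0 1. span {v} \<in> U}" for U
    unfolding rp1_topology_def using istopology_rp1 by simp
  show ?thesis unfolding continuous_map_def topspace_rp1
    using o sphere_RP1 by auto
qed

lemma compact_image_rp1:
  assumes "K \<subseteq> sphere 0 1" "compact K"
  shows "compactin rp1_topology ((\<lambda>v. span {v}) ` K)"
  by (rule image_compactin[OF _ cont_map_rp1]) (use assms in \<open>simp add: compactin_subtopology\<close>)

lemma cont_mv: "continuous_on S (\<lambda>p::mat2\<times>(real^2). fst p *v x)"
  unfolding matrix_vector_mult_def
  by (intro continuous_on_vec_lambda continuous_intros)

lemma cont_mv2: "continuous_on S (\<lambda>p::mat2\<times>(real^2). fst p *v snd p)"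
  unfolding matrix_vector_mult_def
  by (intro continuous_on_vec_lambda continuous_intros)

lemma scale_mv: "(c *\<^sub>R M) *v x = c *\<^sub>R ((M::mat2) *v x)"
  by (simp add: scaleR_matrix_vector_assoc)

lemma normalize:
  assumes "M \<in> scrR As"
  defines "N \<equiv> (1 / norm M) *\<^sub>R M"
  shows "N \<in> scrS As" "norm N = 1" "det N = 0"
    "range (\<lambda>x. N *v x) = range (\<lambda>x. M *v x)" "{x. N *v x = 0} = {x. M *v x = 0}"
proof -
  have M: "M \<in> scrS As" "M \<noteq> 0" "det M = 0" using assms rank1_iff unfolding scrR_def by auto
  let ?c = "1 / norm M"
  have c: "?c \<noteq> 0" using M by simp
  show "N \<in> scrS As" unfolding N_def by (rule scrS_scale[OF M(1)])
  show "norm N = 1" unfolding N_def using M by simp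
  show "det N = 0" unfolding N_def using M(3) by (simp add: det_2 algebra_simps)
  show "range (\<lambda>x. N *v x) = range (\<lambda>x. M *v x)"
  proof (intro set_eqI iffI)
    fix y assume "y \<in> range (\<lambda>x. N *v x)"
    then obtain x where "y = N *v x" by auto
    then have "y = M *v (?c *\<^sub>R x)" unfolding N_def scale_mv by (simp add: matrix_vector_mult_scaleR)
    then show "y \<in> range (\<lambda>x. M *v x)" by blast
  next
    fix y assume "y \<in> range (\<lambda>x. M *v x)"
    then obtain x where "y = M *v x" by auto
    then have "y = N *v (norm M *\<^sub>R x)" unfolding N_def scale_mv using M(2)
      by (simp add: matrix_vector_mult_scaleR)
    then show "y \<in> range (\<lambda>x. N *v x)" by blast
  qed
  show "{x. N *v x = 0} = {x. M *v x = 0}" unfolding N_def scale_mv using c by simp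
qed

lemma scrR_iff: "M \<in> scrR As \<longleftrightarrow> M \<in> scrS As \<and> M \<noteq> 0 \<and> det M = 0"
  unfolding scrR_def using rank1_iff[of M] by blast

theorem lemma3p3:
  fixes As :: "mat2 set"
  assumes GL: "\<forall>M\<in>As. invertible M"
    and nonempty_R: "scrR As \<noteq> {}"
    and am: "almost_multiplicative (semigrp As)"
  defines "Xu \<equiv> {range (\<lambda>x. M *v x) | M. M \<in> scrR As}"
    and "Xs \<equiv> {{x. M *v x = 0} | M. M \<in> scrR As}"
  shows "Xu \<noteq> {} \<and> Xs \<noteq> {} \<and> Xu \<subseteq> RP1 \<and> Xs \<subseteq> RP1
      \<and> compactin rp1_topology Xu \<and> compactin rp1_topology Xs \<and> Xu \<inter> Xs = {}
      \<and> (\<forall>M\<in>scrS As. M \<noteq> 0 \<longrightarrow> (\<forall>V\<in>Xu.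
            (\<lambda>x. M *v x) ` V \<in> RP1 \<and> (\<lambda>x. M *v x) ` V \<in> Xu))"
proof -
  define C where "C = {M \<in> scrS As. norm M = 1 \<and> det M = 0}"
  have CR: "M \<in> scrR As" if "M \<in> C" for M
  proof -
    have M: "M \<in> scrS As" "norm M = 1" "det M = 0" using that unfolding C_def by auto
    then have "M \<noteq> 0" by auto
    then have "rank M = 1" using M(3) rank1_iff by blast
    then show ?thesis using M(1) unfolding scrR_def by blast
  qed
  have "C = scrS As \<inter> sphere 0 1 \<inter> {M. det M = 0}" unfolding C_def by auto
  moreover have "closed (scrS As \<inter> sphere 0 1 \<inter> {M::mat2. det M = 0})"
    using scrS_closed
    by (intro closed_Int closed_sphere) (auto intro!: closed_Collect_eq continuous_intros simp: det_2)
  ultimately have "closed C" by simp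
  moreover have "bounded C" unfolding C_def by (rule bounded_subset[of "cball 0 1"]) auto
  ultimately have cC: "compact C" by (simp add: compact_eq_bounded_closed)

  define Tu where "Tu = (C \<times> sphere 0 1) \<inter>
     {p. \<forall>x. fst p *v x = ((fst p *v x) \<bullet> snd p) *\<^sub>R snd p}"
  define Ts where "Ts = (C \<times> sphere 0 1) \<inter> {p. fst p *v snd p = 0}"
  have "closed {p::mat2\<times>(real^2). \<forall>x. fst p *v x = ((fst p *v x) \<bullet> snd p) *\<^sub>R snd p}"
    by (intro closed_Collect_all closed_Collect_eq cont_mv continuous_intros)
  then have cTu: "compact Tu" unfolding Tu_def
    using cC by (intro compact_Int_closed compact_Times) auto
  have "closed {p::mat2\<times>(real^2). fst p *v snd p = 0}"
    by (intro closed_Collect_eq cont_mv2 continuous_intros)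
  then have cTs: "compact Ts" unfolding Ts_def
    using cC by (intro compact_Int_closed compact_Times) auto
  have cKu: "compact (snd ` Tu)" using cTu by (intro compact_continuous_image continuous_intros)
  have cKs: "compact (snd ` Ts)" using cTs by (intro compact_continuous_image continuous_intros)
  have sKu: "snd ` Tu \<subseteq> sphere 0 1" unfolding Tu_def by auto
  have sKs: "snd ` Ts \<subseteq> sphere 0 1" unfolding Ts_def by auto

  have Xu_eq: "Xu = (\<lambda>v. span {v}) ` (snd ` Tu)"
  proof (intro set_eqI iffI)
    fix V assume "V \<in> Xu"
    then obtain M where M: "M \<in> scrR As" "V = range (\<lambda>x. M *v x)" unfolding Xu_def by auto
    define N where "N = (1 / norm M) *\<^sub>R M"
    note n = normalize[OF M(1), folded N_def]
    have NC: "N \<in> C" using n unfolding C_def by auto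
    obtain u where u: "u \<noteq> 0" "range (\<lambda>x. M *v x) = span {u}"
      using range_line M(1) unfolding scrR_def by blast
    obtain w where w: "norm w = 1" "span {w} = span {u}" using unit_gen[OF u(1)] by blast
    have "N *v x = ((N *v x) \<bullet> w) *\<^sub>R w" for x
      using in_span1_unit[OF w(1)] n(4) u(2) w(2) by blast
    then have "(N, w) \<in> Tu" unfolding Tu_def using NC w(1) by auto
    moreover have "V = span {w}" using M(2) u(2) w(2) by simp
    ultimately show "V \<in> (\<lambda>v. span {v}) ` (snd ` Tu)" by force
  next
    fix V assume "V \<in> (\<lambda>v. span {v}) ` (snd ` Tu)"
    then obtain M v where Mv: "(M, v) \<in> Tu" "V = span {v}" by auto
    have MC: "M \<in> C" and v: "norm v = 1" and
      Mx: "\<And>x. M *v x = ((M *v x) \<bullet> v) *\<^sub>R v" using Mv(1) unfolding Tu_def by auto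
    have MR: "M \<in> scrR As" using CR[OF MC] .
    obtain u where u: "u \<noteq> 0" "range (\<lambda>x. M *v x) = span {u}"
      using range_line MR unfolding scrR_def by blast
    have "u \<in> range (\<lambda>x. M *v x)" using u(2) span_base by blast
    then obtain x where "u = M *v x" by auto
    then have "u \<in> span {v}" using Mx[of x] by (metis span_mul span_base singletonI)
    then have "span {u} = span {v}" using span1_eq u(1) by blast
    then have "V = range (\<lambda>x. M *v x)" using Mv(2) u(2) by simp
    then show "V \<in> Xu" unfolding Xu_def using MR by blast
  qed

  have Xs_eq: "Xs = (\<lambda>v. span {v}) ` (snd ` Ts)"
  proof (intro set_eqI iffI)
    fix V assume "V \<in> Xs"
    then obtain M where M: "M \<in> scrR As" "V = {x. M *v x = 0}" unfolding Xs_def by auto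
    define N where "N = (1 / norm M) *\<^sub>R M"
    note n = normalize[OF M(1), folded N_def]
    have NC: "N \<in> C" using n unfolding C_def by auto
    have M0: "M \<noteq> 0" "det M = 0" using M(1) unfolding scrR_iff by blast+
    obtain u where u: "u \<noteq> 0" "{x. M *v x = 0} = span {u}"
      using ker_line[OF M0] by blast
    obtain w where w: "norm w = 1" "span {w} = span {u}" using unit_gen[OF u(1)] by blast
    have "w \<in> {x. N *v x = 0}" using n(5) u(2) w(2) span_base by blast
    then have "(N, w) \<in> Ts" unfolding Ts_def using NC w(1) by auto
    moreover have "V = span {w}" using M(2) u(2) w(2) by simp
    ultimately show "V \<in> (\<lambda>v. span {v}) ` (snd ` Ts)" by force
  next
    fix V assume "V \<in> (\<lambda>v. span {v}) ` (snd ` Ts)"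
    then obtain M v where Mv: "(M, v) \<in> Ts" "V = span {v}" by auto
    have MC: "M \<in> C" and v: "norm v = 1" and Mv0: "M *v v = 0"
      using Mv(1) unfolding Ts_def by auto
    have MR: "M \<in> scrR As" using CR[OF MC] .
    have M0: "M \<noteq> 0" "det M = 0" using MR unfolding scrR_iff by blast+
    obtain u where u: "u \<noteq> 0" "{x. M *v x = 0} = span {u}"
      using ker_line[OF M0] by blast
    have v0: "v \<noteq> 0" using v by auto
    have "v \<in> span {u}" using Mv0 u(2) by blast
    then have "span {v} = span {u}" using span1_eq v0 by blast
    then have "V = {x. M *v x = 0}" using Mv(2) u(2) by simp
    then show "V \<in> Xs" unfolding Xs_def using MR by blast
  qed

  have ne: "Xu \<noteq> {}" "Xs \<noteq> {}" using nonempty_R unfolding Xu_def Xs_def by auto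
  have XuR: "Xu \<subseteq> RP1" unfolding Xu_eq using sKu sphere_RP1 by auto
  have XsR: "Xs \<subseteq> RP1" unfolding Xs_eq using sKs sphere_RP1 by auto
  have compu: "compactin rp1_topology Xu" unfolding Xu_eq by (rule compact_image_rp1[OF sKu cKu])
  have comps: "compactin rp1_topology Xs" unfolding Xs_eq by (rule compact_image_rp1[OF sKs cKs])
  have disj: "Xu \<inter> Xs = {}"
  proof (rule ccontr)
    assume "Xu \<inter> Xs \<noteq> {}"
    then obtain M N where M: "M \<in> scrR As" "N \<in> scrR As"
      and eq: "range (\<lambda>x. M *v x) = {x. N *v x = 0}" unfolding Xu_def Xs_def by auto
    have "(N ** M) *v x = 0" for x
      using eq by (auto simp: matrix_vector_mul_assoc[symmetric])
    then have "N ** M = 0" using matrix_eq[of "N ** M" 0] by simp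
    moreover have "N ** M \<noteq> 0"
      using M unfolding scrR_iff by (intro scrS_nonzero_mult[OF am]) blast+
    ultimately show False by simp
  qed
  have lastp: "\<forall>M\<in>scrS As. M \<noteq> 0 \<longrightarrow> (\<forall>V\<in>Xu.
            (\<lambda>x. M *v x) ` V \<in> RP1 \<and> (\<lambda>x. M *v x) ` V \<in> Xu)"
  proof (intro ballI impI)
    fix M V assume M: "M \<in> scrS As" "M \<noteq> 0" and "V \<in> Xu"
    then obtain N where N: "N \<in> scrR As" "V = range (\<lambda>x. N *v x)" unfolding Xu_def by auto
    have N': "N \<in> scrS As" "N \<noteq> 0" "det N = 0" using N(1) unfolding scrR_iff by blast+
    have "M ** N \<in> scrS As" using scrS_mult M(1) N'(1) by blast
    moreover have "M ** N \<noteq> 0" using scrS_nonzero_mult[OF am M(1) N'(1) M(2) N'(2)] .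
    moreover have "det (M ** N) = 0" using N'(3) by (simp add: det_mul)
    ultimately have MN: "M ** N \<in> scrR As" unfolding scrR_iff by blast+
    have img: "(\<lambda>x. M *v x) ` V = range (\<lambda>x. (M ** N) *v x)"
      unfolding N(2) by (auto simp: matrix_vector_mul_assoc[symmetric] image_iff)
    have "(\<lambda>x. M *v x) ` V \<in> Xu" unfolding img Xu_def using MN by blast
    then show "(\<lambda>x. M *v x) ` V \<in> RP1 \<and> (\<lambda>x. M *v x) ` V \<in> Xu" using XuR by blast
  qed
  show ?thesis by (intro conjI ne XuR XsR compu comps disj lastp)
qed

end
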